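(* Let $r\ge1$, $n$ be integers and let $\sigma,\sigma':\mathbb{Z}_n\to\{0,1\}$ be a temporally periodic pair. Then for every block $[i,j]\in B(\sigma')$, each of the cell intervals $[i-r-1,j-r]$ and $[i+r,j+r+1]$ contains exactly one switch point of $\sigma$.
   Context: Cells are elements of $\mathbb{Z}_n$, arithmetic mod $n$; $[a,b]$ denotes the cyclic interval $a,\dots,b$. The majority rule with radius $r$: $\mathrm{maj}_r(\sigma)(i)=0$ if among the cells of $[i-r,i+r]$ strictly more have value $0$ than $1$ under $\sigma$, and $=1$ otherwise. A pair $\sigma,\sigma'$ is a temporally periodic pair if $\mathrm{maj}_r(\sigma)=\sigma'$ and $\mathrm{maj}_r(\sigma')=\sigma$. For $\beta\in\{0,1\}$, $B^\beta(\sigma)$ is the set of cell intervals $[i,j]$ with $\sigma(k)=\beta$ for all $k\in[i,j]$ and $\sigma(i-1)=\sigma(j+1)=1-\beta$; $B(\sigma)=B^0(\sigma)\cup B^1(\sigma)$. A switch point of $\sigma$ is a pair of consecutive cells $\ell,\ell+1$ with $\sigma(\ell)\ne\sigma(\ell+1)$; an interval contains the switch point if it contains both $\ell$ and $\ell+1$. *)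

theory Defs
  imports Main
begin

text \<open>Configurations on Z_n are represented as n-periodic functions int \<Rightarrow> bool
  (False = 0, True = 1); cell k of Z_n corresponds to all integers congruent to k mod n.\<close>

definition periodic_cfg :: "nat \<Rightarrow> (int \<Rightarrow> bool) \<Rightarrow> bool" where
  "periodic_cfg n \<sigma> \<longleftrightarrow> (\<forall>i. \<sigma> (i + int n) = \<sigma> i)"

definition maj :: "nat \<Rightarrow> (int \<Rightarrow> bool) \<Rightarrow> int \<Rightarrow> bool" where
  "maj r \<sigma> i \<longleftrightarrow>
     \<not> (card {k \<in> {i - int r .. i + int r}. \<not> \<sigma> k} > card {k \<in> {i - int r .. i + int r}. \<sigma> k})"

definition temp_periodic_pair :: "nat \<Rightarrow> (int \<Rightarrow> bool) \<Rightarrow> (int \<Rightarrow> bool) \<Rightarrow> bool" where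
  "temp_periodic_pair r \<sigma> \<sigma>' \<longleftrightarrow> maj r \<sigma> = \<sigma>' \<and> maj r \<sigma>' = \<sigma>"

text \<open>[i,j] is a block of \<sigma> (an element of B(\<sigma>) = B^0 \<union> B^1); a cyclic interval of Z_n
  is lifted to an integer interval {i..j} with i \<le> j < i + n.\<close>
definition is_block :: "nat \<Rightarrow> (int \<Rightarrow> bool) \<Rightarrow> int \<Rightarrow> int \<Rightarrow> bool" where
  "is_block n \<sigma> i j \<longleftrightarrow> i \<le> j \<and> j < i + int n \<and>
     (\<exists>\<beta>. (\<forall>k \<in> {i..j}. \<sigma> k = \<beta>) \<and> \<sigma> (i - 1) = (\<not> \<beta>) \<and> \<sigma> (j + 1) = (\<not> \<beta>))"

text \<open>Number of switch points (l, l+1) of \<sigma> contained in the (lifted) cell interval [a,b],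
  i.e. with both l and l+1 in [a,b].\<close>
definition switch_count :: "(int \<Rightarrow> bool) \<Rightarrow> int \<Rightarrow> int \<Rightarrow> nat" where
  "switch_count \<sigma> a b = card {l \<in> {a..<b}. \<sigma> l \<noteq> \<sigma> (l + 1)}"

end

theory Submission
  imports Defs
begin

lemma fin: "finite {k. a \<le> k \<and> k \<le> (b::int) \<and> P k}"
  by (rule finite_subset[of _ "{a..b}"]) auto

lemma card_win: "card {k \<in> {c - int r .. c + int r}. \<not> \<tau> k} + card {k \<in> {c - int r .. c + int r}. \<tau> k} = 2*r+1"
proof -
  have "card {k \<in> {c - int r .. c + int r}. \<not> \<tau> k} + card {k \<in> {c - int r .. c + int r}. \<tau> k}
      = card {c - int r .. c + int r}"
  proof -
    have "{k \<in> {c - int r .. c + int r}. \<not> \<tau> k} \<union> {k \<in> {c - int r .. c + int r}. \<tau> k} = {c - int r .. c + int r}" by auto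
    moreover have "card ({k \<in> {c - int r .. c + int r}. \<not> \<tau> k} \<union> {k \<in> {c - int r .. c + int r}. \<tau> k})
       = card {k \<in> {c - int r .. c + int r}. \<not> \<tau> k} + card {k \<in> {c - int r .. c + int r}. \<tau> k}"
      by (rule card_Un_disjoint) (auto intro: fin)
    ultimately show ?thesis by simp
  qed
  also have "\<dots> = 2*r+1" by simp
  finally show ?thesis .
qed

lemma maj_iff: "maj r \<tau> c \<longleftrightarrow> card {k \<in> {c - int r .. c + int r}. \<tau> k} \<ge> r + 1"
  using card_win[of c r \<tau>] unfolding maj_def by linarith

lemma shift_card:
  "card {k \<in> {l - int r .. l + int r}. \<tau> k} + (if \<tau> (l + int r + 1) then 1 else 0)
   = (if \<tau> (l - int r) then 1 else 0) + card {k \<in> {(l+1) - int r .. (l+1) + int r}. \<tau> k}"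
proof -
  let ?A = "{k \<in> {l - int r .. l + int r}. \<tau> k}"
  let ?B = "{k \<in> {(l+1) - int r .. (l+1) + int r}. \<tau> k}"
  let ?P = "{k \<in> {l + int r + 1}. \<tau> k}"
  let ?Q = "{k \<in> {l - int r}. \<tau> k}"
  have e: "?A \<union> ?P = ?Q \<union> ?B" by auto
  have c1: "card (?A \<union> ?P) = card ?A + card ?P" by (rule card_Un_disjoint) (auto intro: fin)
  have c2: "card (?Q \<union> ?B) = card ?Q + card ?B" by (rule card_Un_disjoint) (auto intro: fin)
  have p: "card ?P = (if \<tau> (l + int r + 1) then 1 else 0)"
  proof (cases "\<tau> (l + int r + 1)")
    case True then have "?P = {l + int r + 1}" by auto
    then show ?thesis using True by simp
  qed simp
  have q: "card ?Q = (if \<tau> (l - int r) then 1 else 0)"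
  proof (cases "\<tau> (l - int r)")
    case True then have "?Q = {l - int r}" by auto
    then show ?thesis using True by simp
  qed simp
  show ?thesis using e c1 c2 p q by simp
qed

lemma maj_switch:
  assumes "maj r \<tau> l \<noteq> maj r \<tau> (l+1)"
  shows "\<tau> (l - int r) = maj r \<tau> l \<and> \<tau> (l + int r + 1) = maj r \<tau> (l+1)"
  using assms shift_card[of l r \<tau>] maj_iff[of r \<tau> l] maj_iff[of r \<tau> "l+1"]
  by (auto split: if_splits)

lemma prop_true:
  fixes f :: "int \<Rightarrow> bool"
  assumes "\<forall>l\<in>{a..<b}. \<not> (f l \<and> \<not> f (l+1))" "a \<le> x" "x \<le> y" "y \<le> b" "f x"
  shows "f y"
  using assms(3-5)
proof (induction y rule: int_ge_induct)
  case base then show ?case using assms by simp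
next
  case (step k) then show ?case using assms(1,2) by force
qed

lemma prop_false:
  fixes f :: "int \<Rightarrow> bool"
  assumes "\<forall>l\<in>{a..<b}. \<not> (\<not> f l \<and> f (l+1))" "a \<le> x" "x \<le> y" "y \<le> b" "\<not> f x"
  shows "\<not> f y"
  using assms(3-5)
proof (induction y rule: int_ge_induct)
  case base then show ?case using assms by simp
next
  case (step k) then show ?case using assms(1,2) by force
qed

lemma one_switch:
  fixes f :: "int \<Rightarrow> bool"
  assumes "a \<le> b" "\<not> f a" "f b" "\<forall>l\<in>{a..<b}. \<not> (f l \<and> \<not> f (l+1))"
  shows "card {l \<in> {a..<b}. f l \<noteq> f (l+1)} = 1"
proof -
  have ex: "\<exists>l\<in>{a..<b}. \<not> f l \<and> f (l+1)"
  proof (rule ccontr)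
    assume "\<not> ?thesis"
    then have "\<not> f b" using prop_false[of a b f a b] assms by auto
    then show False using assms by simp
  qed
  then obtain m where m: "m \<in> {a..<b}" "\<not> f m" "f (m+1)" by blast
  have "{l \<in> {a..<b}. f l \<noteq> f (l+1)} = {m}"
  proof (intro equalityI subsetI)
    fix l assume l: "l \<in> {l \<in> {a..<b}. f l \<noteq> f (l+1)}"
    then have l2: "\<not> f l" "f (l+1)" using assms(4) by auto
    show "l \<in> {m}"
    proof (rule ccontr)
      assume "l \<notin> {m}"
      then have "l < m \<or> m < l" by auto
      then show False
      proof
        assume "l < m"
        then have "f m" using prop_true[of a b f "l+1" m] assms(4) l l2 m by auto
        then show False using m by simp
      next
        assume "m < l"
        then have "f l" using prop_true[of a b f "m+1" l] assms(4) l l2 m by auto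
        then show False using l2 by simp
      qed
    qed
  qed (use m in auto)
  then show ?thesis by simp
qed

theorem claim7:
  fixes r n :: nat and \<sigma> \<sigma>' :: "int \<Rightarrow> bool" and i j :: int
  assumes "r \<ge> 1" and "n \<ge> 1"
    and "periodic_cfg n \<sigma>" and "periodic_cfg n \<sigma>'"
    and "temp_periodic_pair r \<sigma> \<sigma>'"
    and "is_block n \<sigma>' i j"
  shows "switch_count \<sigma> (i - int r - 1) (j - int r) = 1
       \<and> switch_count \<sigma> (i + int r) (j + int r + 1) = 1"
proof -
  have s': "\<sigma>' = maj r \<sigma>" and s: "\<sigma> = maj r \<sigma>'"
    using assms(5) unfolding temp_periodic_pair_def by auto
  obtain \<beta> where ij: "i \<le> j" and blk: "\<forall>k\<in>{i..j}. \<sigma>' k = \<beta>"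
    and bi: "\<sigma>' (i - 1) = (\<not> \<beta>)" and bj: "\<sigma>' (j + 1) = (\<not> \<beta>)"
    using assms(6) unfolding is_block_def by auto
  have sw: "\<sigma> (l - int r) = \<sigma>' l \<and> \<sigma> (l + int r + 1) = \<sigma>' (l+1)" if "\<sigma>' l \<noteq> \<sigma>' (l+1)" for l
    using maj_switch[of r \<sigma> l] that s' by simp
  have sw2: "\<sigma>' (l - int r) = \<sigma> l \<and> \<sigma>' (l + int r + 1) = \<sigma> (l+1)" if "\<sigma> l \<noteq> \<sigma> (l+1)" for l
    using maj_switch[of r \<sigma>' l] that s by simp
  have e1: "\<sigma> (i - int r - 1) = (\<not> \<beta>)" "\<sigma> (i + int r) = \<beta>"
    using sw[of "i-1"] bi blk ij by (auto simp: algebra_simps)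
  have e2: "\<sigma> (j - int r) = \<beta>" "\<sigma> (j + int r + 1) = (\<not> \<beta>)"
    using sw[of "j"] bj blk ij by (auto simp: algebra_simps)
  have n1: "\<forall>l\<in>{i - int r - 1..<j - int r}. \<not> (\<sigma> l = \<beta> \<and> \<sigma> (l+1) = (\<not> \<beta>))"
  proof (intro ballI notI)
    fix l assume l: "l \<in> {i - int r - 1..<j - int r}" and c: "\<sigma> l = \<beta> \<and> \<sigma> (l+1) = (\<not> \<beta>)"
    have "l \<noteq> i - int r - 1" using c e1 by auto
    moreover have "l + 1 \<noteq> j - int r" using c e2 by auto
    ultimately have "l + int r + 1 \<in> {i..j}" using l by auto
    moreover have "\<sigma>' (l + int r + 1) = (\<not> \<beta>)" using sw2[of l] c by auto
    ultimately show False using blk by auto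
  qed
  have n2: "\<forall>l\<in>{i + int r..<j + int r + 1}. \<not> (\<sigma> l = (\<not> \<beta>) \<and> \<sigma> (l+1) = \<beta>)"
  proof (intro ballI notI)
    fix l assume l: "l \<in> {i + int r..<j + int r + 1}" and c: "\<sigma> l = (\<not> \<beta>) \<and> \<sigma> (l+1) = \<beta>"
    have "l \<noteq> i + int r" using c e1 by auto
    moreover have "l + 1 \<noteq> j + int r + 1" using c e2 by auto
    ultimately have "l - int r \<in> {i..j}" using l by auto
    moreover have "\<sigma>' (l - int r) = (\<not> \<beta>)" using sw2[of l] c by auto
    ultimately show False using blk by auto
  qed
  let ?g = "\<lambda>x. \<sigma> x = \<beta>"
  let ?h = "\<lambda>x. \<sigma> x = (\<not> \<beta>)"
  have "card {l \<in> {i - int r - 1..<j - int r}. ?g l \<noteq> ?g (l+1)} = 1"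
    by (rule one_switch) (use ij e1 e2 n1 in auto)
  moreover have "{l \<in> {i - int r - 1..<j - int r}. ?g l \<noteq> ?g (l+1)}
     = {l \<in> {i - int r - 1..<j - int r}. \<sigma> l \<noteq> \<sigma> (l+1)}" by auto
  moreover have "card {l \<in> {i + int r..<j + int r + 1}. ?h l \<noteq> ?h (l+1)} = 1"
    by (rule one_switch) (use ij e1 e2 n2 in auto)
  moreover have "{l \<in> {i + int r..<j + int r + 1}. ?h l \<noteq> ?h (l+1)}
     = {l \<in> {i + int r..<j + int r + 1}. \<sigma> l \<noteq> \<sigma> (l+1)}" by auto
  ultimately show ?thesis unfolding switch_count_def by simp
qed

end
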